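(* For all sufficiently large $n$ the following holds for $T\sim\mathcal{R}(n,2)$. (1) The probability that there exist $R\subseteq A_1$ with $|R|\ge n/20$, $S\subseteq A_2$ with $|S|\ge n/20$ and a permutation $\pi$ of $V(T)$ such that $L_\pi(T)$ has no edge between $R$ and $S$, is at most $1/n$. (2) For every $D\in\{+,-\}^2$ and every ordered pair $(u,v)$ of two distinct vertices of $T$, $\Pr\left[|C_D((u,v))|\ge 1.1n/4\right]\le 1/n^3$.
   Context: $\mathcal{R}(n,2)$ is the probability space of bipartite tournaments with vertex classes $A_1,A_2$ of size $n$ each, every edge between $A_1$ and $A_2$ oriented independently and uniformly at random. For a permutation (bijection) $\pi:V(T)\to\{1,\ldots,|V(T)|\}$, $L_\pi(T)$ is the spanning subgraph of $T$ consisting of all edges $(u,v)\in E(T)$ with $\pi(u)<\pi(v)$. For $D\in\{+,-\}^d$ and a sequence $A'=(v_1,\ldots,v_d)$ of distinct vertices, $C_D(A')$ is the set of vertices $w$ of $T$ such that for each $j$, $(v_j,w)\in E(T)$ if $D(j)=+$ and $(w,v_j)\in E(T)$ if $D(j)=-$. *)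

theory Defs
  imports Complex_Main "HOL-Library.FuncSet"
begin

text \<open>Vertices of a bipartite tournament in R(n,2): (False,i) is the i-th vertex of A1,
 (True,j) the j-th vertex of A2, for i,j < n.  An outcome is an orientation
 ori :: nat \<times> nat \<Rightarrow> bool, where ori (i,j) = True means the edge is oriented from
 (False,i) to (True,j), and False means from (True,j) to (False,i).\<close>

type_synonym vert = "bool \<times> nat"

definition A1 :: "nat \<Rightarrow> vert set" where
  "A1 n = {(False, i) | i. i < n}"

definition A2 :: "nat \<Rightarrow> vert set" where
  "A2 n = {(True, j) | j. j < n}"

definition verts :: "nat \<Rightarrow> vert set" where
  "verts n = A1 n \<union> A2 n"

definition orients :: "nat \<Rightarrow> (nat \<times> nat \<Rightarrow> bool) set" where
  "orients n = ({..<n} \<times> {..<n}) \<rightarrow>\<^sub>E (UNIV :: bool set)"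

definition edges :: "nat \<Rightarrow> (nat \<times> nat \<Rightarrow> bool) \<Rightarrow> (vert \<times> vert) set" where
  "edges n ori =
     {((False, i), (True, j)) | i j. i < n \<and> j < n \<and> ori (i, j)} \<union>
     {((True, j), (False, i)) | i j. i < n \<and> j < n \<and> \<not> ori (i, j)}"

definition prob_R :: "nat \<Rightarrow> ((nat \<times> nat \<Rightarrow> bool) \<Rightarrow> bool) \<Rightarrow> real" where
  "prob_R n P = real (card {ori \<in> orients n. P ori}) / real (card (orients n))"

definition L_perm :: "nat \<Rightarrow> (nat \<times> nat \<Rightarrow> bool) \<Rightarrow> (vert \<Rightarrow> nat) \<Rightarrow> (vert \<times> vert) set" where
  "L_perm n ori \<pi> = {(u, v) \<in> edges n ori. \<pi> u < \<pi> v}"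

text \<open>C_D(A'): D is a sign vector given as a bool list (True = +, False = -),
  A' a list of vertices of the same length.\<close>
definition C_D :: "nat \<Rightarrow> (nat \<times> nat \<Rightarrow> bool) \<Rightarrow> bool list \<Rightarrow> vert list \<Rightarrow> vert set" where
  "C_D n ori D vs = {w \<in> verts n. \<forall>j < length vs.
      (if D ! j then (vs ! j, w) \<in> edges n ori else (w, vs ! j) \<in> edges n ori)}"

end

theory Submission
  imports Defs "HOL-Real_Asymp.Real_Asymp"
begin

lemma card_fix:
  assumes K: "K \<subseteq> {..<n} \<times> {..<n}"
  shows "card {ori \<in> orients n. \<forall>x\<in>K. ori x = h x} = 2 ^ (n*n - card K)"
proof -
  let ?A = "{..<n} \<times> {..<n}"
  have "bij_betw (\<lambda>ori. restrict ori (?A - K)) {ori \<in> orients n. \<forall>x\<in>K. ori x = h x}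
          ((?A - K) \<rightarrow>\<^sub>E (UNIV::bool set))"
  proof (rule bij_betw_byWitness[where f' = "\<lambda>f x. if x \<in> K then h x else f x"])
    show "\<forall>a\<in>{ori \<in> orients n. \<forall>x\<in>K. ori x = h x}.
       (\<lambda>x. if x \<in> K then h x else restrict a (?A - K) x) = a"
      using K by (auto simp: orients_def fun_eq_iff PiE_iff extensional_def)
    show "\<forall>a'\<in>(?A - K) \<rightarrow>\<^sub>E UNIV. restrict (\<lambda>x. if x \<in> K then h x else a' x) (?A - K) = a'"
      by (auto simp: fun_eq_iff PiE_iff extensional_def)
    show "(\<lambda>ori. restrict ori (?A - K)) ` {ori \<in> orients n. \<forall>x\<in>K. ori x = h x} \<subseteq> (?A - K) \<rightarrow>\<^sub>E UNIV"
      by auto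
    show "(\<lambda>f x. if x \<in> K then h x else f x) ` ((?A - K) \<rightarrow>\<^sub>E UNIV) \<subseteq> {ori \<in> orients n. \<forall>x\<in>K. ori x = h x}"
      using K by (auto simp: orients_def PiE_iff extensional_def)
  qed
  then have "card {ori \<in> orients n. \<forall>x\<in>K. ori x = h x} = card ((?A - K) \<rightarrow>\<^sub>E (UNIV::bool set))"
    by (rule bij_betw_same_card)
  also have "\<dots> = 2 ^ card (?A - K)"
    by (simp add: card_PiE)
  also have "card (?A - K) = n * n - card K"
    using K by (simp add: card_Diff_subset finite_subset card_cartesian_product)
  finally show ?thesis .
qed

lemma card_orients: "card (orients n) = 2 ^ (n*n)"
  using card_fix[of "{}" n] by simp

lemma finite_orients: "finite (orients n)"
  by (simp add: orients_def finite_PiE)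

lemma edges_iff: "(x, y) \<in> edges n ori \<longleftrightarrow>
   (fst x = False \<and> fst y = True \<and> snd x < n \<and> snd y < n \<and> ori (snd x, snd y)) \<or>
   (fst x = True \<and> fst y = False \<and> snd x < n \<and> snd y < n \<and> \<not> ori (snd y, snd x))"
  by (cases x; cases y) (auto simp: edges_def)

lemma A1_iff: "x \<in> A1 n \<longleftrightarrow> fst x = False \<and> snd x < n"
  by (cases x) (auto simp: A1_def)
lemma A2_iff: "x \<in> A2 n \<longleftrightarrow> fst x = True \<and> snd x < n"
  by (cases x) (auto simp: A2_def)
lemma verts_iff: "x \<in> verts n \<longleftrightarrow> snd x < n"
  by (cases x) (auto simp: verts_def A1_iff A2_iff)

lemma verts_eq: "verts n = (\<lambda>i. (False, i)) ` {..<n} \<union> (\<lambda>i. (True, i)) ` {..<n}"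
  by (auto simp: verts_iff image_iff)

lemma finite_verts: "finite (verts n)"
  by (simp add: verts_eq)

lemma card_verts: "card (verts n) = 2 * n"
proof -
  have "card ((\<lambda>i. (False, i)) ` {..<n} \<union> (\<lambda>i. (True, i)) ` {..<n}) = n + n"
    by (subst card_Un_disjoint) (auto simp: card_image inj_on_def)
  then show ?thesis by (simp add: verts_eq)
qed


lemma sum_Pow_power:
  fixes x :: real
  assumes "finite A"
  shows "(\<Sum>X\<in>Pow A. x ^ card X) = (x + 1) ^ card A"
  using prod_add[OF assms, of "\<lambda>_. x" "\<lambda>_. 1"] by simp

lemma part2_bound:
  fixes p q :: "nat \<Rightarrow> nat \<times> nat" and e1 e2 :: bool
  assumes ip: "inj_on p {..<n}" and iq: "inj_on q {..<n}"
    and disj: "p ` {..<n} \<inter> q ` {..<n} = {}"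
    and pA: "p ` {..<n} \<subseteq> {..<n} \<times> {..<n}" and qA: "q ` {..<n} \<subseteq> {..<n} \<times> {..<n}"
  shows "real (card {ori \<in> orients n. real (card {k. k < n \<and> ori (p k) = e1 \<and> ori (q k) = e2}) \<ge> 11 * real n / 40})
           * (9/8) powr (11 * real n / 40) \<le> 2 ^ (n*n) * (33/32) ^ n"
proof -
  define M where "M ori = {k. k < n \<and> ori (p k) = e1 \<and> ori (q k) = e2}" for ori :: "nat \<times> nat \<Rightarrow> bool"
  define E where "E = {ori \<in> orients n. real (card (M ori)) \<ge> 11 * real n / 40}"
  have finE: "finite E" unfolding E_def using finite_orients by simp
  have MsubN: "M ori \<subseteq> {..<n}" for ori unfolding M_def by auto
  have finM: "finite (M ori)" for ori using MsubN finite_subset by blast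
  have "real (card E) * (9/8) powr (11 * real n / 40) = (\<Sum>ori\<in>E. (9/8) powr (11 * real n / 40))"
    by simp
  also have "\<dots> \<le> (\<Sum>ori\<in>E. (9/8::real) ^ card (M ori))"
  proof (rule sum_mono)
    fix ori assume "ori \<in> E"
    then have "11 * real n / 40 \<le> real (card (M ori))" by (simp add: E_def)
    then have "(9/8::real) powr (11 * real n / 40) \<le> (9/8) powr real (card (M ori))"
      by (rule powr_mono) simp
    then show "(9/8::real) powr (11 * real n / 40) \<le> (9/8) ^ card (M ori)"
      by (simp add: powr_realpow)
  qed
  also have "\<dots> \<le> (\<Sum>ori\<in>orients n. (9/8::real) ^ card (M ori))"
    by (rule sum_mono2) (auto simp: finite_orients E_def)
  also have "\<dots> = (\<Sum>ori\<in>orients n. \<Sum>K\<in>{K \<in> Pow {..<n}. K \<subseteq> M ori}. (1/8::real) ^ card K)"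
  proof (rule sum.cong[OF refl])
    fix ori
    have "{K \<in> Pow {..<n}. K \<subseteq> M ori} = Pow (M ori)" using MsubN by auto
    then show "(9/8::real) ^ card (M ori) = (\<Sum>K\<in>{K \<in> Pow {..<n}. K \<subseteq> M ori}. (1/8::real) ^ card K)"
      using sum_Pow_power[OF finM[of ori], of "1/8"] by simp
  qed
  also have "\<dots> = (\<Sum>K\<in>Pow {..<n}. \<Sum>ori\<in>{ori \<in> orients n. K \<subseteq> M ori}. (1/8::real) ^ card K)"
    by (rule sum.swap_restrict) (auto simp: finite_orients)
  also have "\<dots> = (\<Sum>K\<in>Pow {..<n}. 2 ^ (n*n) * (1/32::real) ^ card K)"
  proof (rule sum.cong[OF refl])
    fix K assume K: "K \<in> Pow {..<n}"
    define K' where "K' = p ` K \<union> q ` K"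
    define h where "h x = (if x \<in> p ` K then e1 else e2)" for x
    have K'A: "K' \<subseteq> {..<n} \<times> {..<n}" using K pA qA unfolding K'_def by auto
    have "{ori \<in> orients n. K \<subseteq> M ori} = {ori \<in> orients n. \<forall>x\<in>K'. ori x = h x}"
    proof -
      have "K \<subseteq> M ori \<longleftrightarrow> (\<forall>x\<in>K'. ori x = h x)" for ori
      proof
        assume a: "K \<subseteq> M ori"
        show "\<forall>x\<in>K'. ori x = h x"
        proof
          fix x assume "x \<in> K'"
          then consider k where "k \<in> K" "x = p k" | k where "k \<in> K" "x = q k" "x \<notin> p ` K"
            unfolding K'_def by blast
          then show "ori x = h x"
          proof cases
            case 1 then show ?thesis using a by (auto simp: h_def M_def)
          next
            case 2 then show ?thesis using a by (auto simp: h_def M_def)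
          qed
        qed
      next
        assume a: "\<forall>x\<in>K'. ori x = h x"
        show "K \<subseteq> M ori"
        proof
          fix k assume k: "k \<in> K"
          then have kn: "k < n" using K by auto
          have "q k \<notin> p ` K" using disj K kn by blast
          then show "k \<in> M ori" using a k kn unfolding M_def K'_def h_def by auto
        qed
      qed
      then show ?thesis by auto
    qed
    then have c: "card {ori \<in> orients n. K \<subseteq> M ori} = 2 ^ (n*n - card K')"
      using card_fix[OF K'A] by simp
    have cK': "card K' = 2 * card K"
    proof -
      have "card K' = card (p ` K) + card (q ` K)"
        unfolding K'_def using K disj
        by (subst card_Un_disjoint) (auto intro: finite_subset)
      also have "\<dots> = card K + card K"
        using K by (simp add: card_image inj_on_subset[OF ip] inj_on_subset[OF iq])
      finally show ?thesis by simp
    qed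
    have le: "card K' \<le> n * n"
      using card_mono[OF _ K'A] by simp
    have "(2::real) ^ (n*n) = 2 ^ (n*n - card K') * 2 ^ card K'"
      using le by (simp add: power_add[symmetric])
    also have "(2::real) ^ card K' = 4 ^ card K"
      by (simp add: cK' power_mult)
    finally have e: "(2::real) ^ (n*n) = 2 ^ (n*n - card K') * 4 ^ card K" .
    have "(1/32::real) ^ card K * 4 ^ card K = (1/8) ^ card K"
      by (simp add: power_mult_distrib[symmetric])
    then show "(\<Sum>ori\<in>{ori \<in> orients n. K \<subseteq> M ori}. (1/8::real) ^ card K) = 2 ^ (n*n) * (1/32) ^ card K"
      using c e by (simp add: algebra_simps)
  qed
  also have "\<dots> = 2 ^ (n*n) * (33/32) ^ n"
    by (simp add: sum_distrib_left[symmetric] sum_Pow_power)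
  finally show ?thesis unfolding E_def M_def .
qed


lemma prob_from_bound:
  assumes "real (card {ori \<in> orients n. P ori}) * c \<le> 2 ^ (n*n) * b" "c > 0"
  shows "prob_R n P \<le> b / c"
  using assms by (simp add: prob_R_def card_orients field_simps)

lemma pw2: "(x::real) > 0 \<Longrightarrow> (x ^ m) powr y = x powr (real m * y)"
proof -
  assume x: "x > 0"
  have "(x ^ m) powr y = (x powr real m) powr y"
    using x by (simp add: powr_realpow)
  also have "\<dots> = x powr (real m * y)" by (simp add: powr_powr)
  finally show ?thesis .
qed
lemma const_bound: "(33/32::real) ^ n / (9/8) powr (11 * real n / 40) \<le> (19/20) powr (real n / 40)"
proof -
  have a: "(33/32::real) ^ n = ((33/32) ^ 40) powr (real n / 40)"
    using pw2[of "33/32" 40 "real n / 40"] by (simp add: powr_realpow)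
  have b: "(9/8::real) powr (11 * real n / 40) = ((9/8) ^ 11) powr (real n / 40)"
    using pw2[of "9/8" 11 "real n / 40"] by simp
  have "(33/32::real) ^ n / (9/8) powr (11 * real n / 40) = ((33/32) ^ 40 / (9/8) ^ 11) powr (real n / 40)"
    unfolding a b by (rule powr_divide[symmetric])
  also have "\<dots> \<le> (19/20) powr (real n / 40)"
    by (rule powr_mono2) (auto simp: divide_simps)
  finally show ?thesis .
qed

lemma all_less_2: "(\<forall>j<Suc (Suc 0). P j) = (P 0 \<and> P (Suc 0))"
  by (auto simp: less_Suc_eq)

lemma part2_prob:
  assumes n: "n \<ge> 1" and D: "length D = 2" and u: "u \<in> verts n" and v: "v \<in> verts n" and uv: "u \<noteq> v"
  shows "prob_R n (\<lambda>ori. real (card (C_D n ori D [u, v])) \<ge> 1.1 * real n / 4) \<le> (19/20) powr (real n / 40)"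
proof -
  obtain b1 i where ui: "u = (b1, i)" by (cases u)
  obtain b2 j where vj: "v = (b2, j)" by (cases v)
  have i: "i < n" and j: "j < n" using u v ui vj by (auto simp: verts_iff)
  have t: "1.1 * real n / 4 = 11 * real n / 40" by simp
  have C_eq: "C_D n ori D [u, v] = {w \<in> verts n.
      (if D ! 0 then (u, w) \<in> edges n ori else (w, u) \<in> edges n ori) \<and>
      (if D ! 1 then (v, w) \<in> edges n ori else (w, v) \<in> edges n ori)}" for ori
    unfolding C_D_def by (simp add: all_less_2)
  have pos: "(9/8::real) powr (11 * real n / 40) > 0" by simp
  show ?thesis
  proof (cases "b1 = b2")
    case False
    have "C_D n ori D [u, v] = {}" for ori
      unfolding C_eq using False ui vj by (auto simp: edges_iff split: if_splits)
    then have emp: "{ori \<in> orients n. real (card (C_D n ori D [u, v])) \<ge> 1.1 * real n / 4} = {}"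
      using n by auto
    show ?thesis unfolding prob_R_def by (subst emp) simp
  next
    case True
    have ij: "i \<noteq> j" using True uv ui vj by auto
    define e1 where "e1 = (if b1 then \<not> D ! 0 else D ! 0)"
    define e2 where "e2 = (if b1 then \<not> D ! 1 else D ! 1)"
    define p where "p k = (if b1 then (k, i) else (i, k))" for k
    define q where "q k = (if b1 then (k, j) else (j, k))" for k
    have Ceq: "C_D n ori D [u, v] = (\<lambda>k. (\<not> b1, k)) ` {k. k < n \<and> ori (p k) = e1 \<and> ori (q k) = e2}" for ori
      unfolding C_eq using True ui vj i j
    by (cases b1) (auto simp: edges_iff verts_iff e1_def e2_def p_def q_def image_iff split: if_splits)
    have cardC: "card (C_D n ori D [u, v]) = card {k. k < n \<and> ori (p k) = e1 \<and> ori (q k) = e2}" for ori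
      unfolding Ceq by (simp add: card_image inj_on_def)
    have bnd: "real (card {ori \<in> orients n. real (card {k. k < n \<and> ori (p k) = e1 \<and> ori (q k) = e2}) \<ge> 11 * real n / 40})
           * (9/8) powr (11 * real n / 40) \<le> 2 ^ (n*n) * (33/32) ^ n"
      by (rule part2_bound) (use ij i j in \<open>auto simp: p_def q_def inj_on_def\<close>)
    have "prob_R n (\<lambda>ori. real (card (C_D n ori D [u, v])) \<ge> 1.1 * real n / 4)
        \<le> (33/32) ^ n / (9/8) powr (11 * real n / 40)"
      by (rule prob_from_bound) (use bnd pos in \<open>simp_all add: cardC t\<close>)
    also have "\<dots> \<le> (19/20) powr (real n / 40)" by (rule const_bound)
    finally show ?thesis .
  qed
qed


lemma part1_bound:
  shows "prob_R n (\<lambda>ori. \<exists>R S \<pi>. R \<subseteq> A1 n \<and> real (card R) \<ge> real n / 20 \<and>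
                          S \<subseteq> A2 n \<and> real (card S) \<ge> real n / 20 \<and>
                          bij_betw \<pi> (verts n) {1 .. card (verts n)} \<and>
                          (\<forall>u v. (u, v) \<in> L_perm n ori \<pi> \<longrightarrow>
                              \<not> ((u \<in> R \<and> v \<in> S) \<or> (u \<in> S \<and> v \<in> R))))
     \<le> (4 ^ n * (2 * real n) ^ (2 * n)) / 2 powr (real n * real n / 400)"
proof (rule prob_from_bound)
  define c where "c = (2::real) powr (real n * real n / 400)"
  define I where "I = {(R', S', g). R' \<subseteq> {..<n} \<and> S' \<subseteq> {..<n} \<and> real (card R') \<ge> real n / 20 \<and>
      real (card S') \<ge> real n / 20 \<and> g \<in> verts n \<rightarrow>\<^sub>E {1..card (verts n)}}"
  define F where "F z = (case z of (R', S', g::bool \<times> nat \<Rightarrow> nat) \<Rightarrow>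
      {ori \<in> orients n. \<forall>x\<in>R' \<times> S'. ori x = (g (True, snd x) < g (False, fst x))})" for z
  define E where "E = {ori \<in> orients n. \<exists>R S \<pi>. R \<subseteq> A1 n \<and> real (card R) \<ge> real n / 20 \<and>
                          S \<subseteq> A2 n \<and> real (card S) \<ge> real n / 20 \<and>
                          bij_betw \<pi> (verts n) {1 .. card (verts n)} \<and>
                          (\<forall>u v. (u, v) \<in> L_perm n ori \<pi> \<longrightarrow>
                              \<not> ((u \<in> R \<and> v \<in> S) \<or> (u \<in> S \<and> v \<in> R)))}"
  have Isub: "I \<subseteq> Pow {..<n} \<times> Pow {..<n} \<times> (verts n \<rightarrow>\<^sub>E {1..card (verts n)})"
    unfolding I_def by auto
  have finP: "finite (Pow {..<n} \<times> Pow {..<n} \<times> (verts n \<rightarrow>\<^sub>E {1..card (verts n)}))"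
    by (simp add: finite_PiE finite_verts)
  have finI: "finite I" using Isub finP finite_subset by blast
  have cardI: "card I \<le> 2 ^ n * 2 ^ n * (2 * n) ^ (2 * n)"
  proof -
    have "card I \<le> card (Pow {..<n} \<times> Pow {..<n} \<times> (verts n \<rightarrow>\<^sub>E {1..card (verts n)}))"
      by (rule card_mono[OF finP Isub])
    also have "\<dots> = 2 ^ n * 2 ^ n * (2 * n) ^ (2 * n)"
      by (simp add: card_cartesian_product card_Pow card_PiE finite_verts card_verts)
    finally show ?thesis .
  qed
  have EsubU: "E \<subseteq> (\<Union>z\<in>I. F z)"
  proof
    fix ori assume "ori \<in> E"
    then obtain R S \<pi> where ori: "ori \<in> orients n" and R: "R \<subseteq> A1 n" "real (card R) \<ge> real n / 20"
      and S: "S \<subseteq> A2 n" "real (card S) \<ge> real n / 20"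
      and bij: "bij_betw \<pi> (verts n) {1 .. card (verts n)}"
      and L: "\<And>u v. (u, v) \<in> L_perm n ori \<pi> \<Longrightarrow> \<not> ((u \<in> R \<and> v \<in> S) \<or> (u \<in> S \<and> v \<in> R))"
      unfolding E_def by blast
    define g where "g = restrict \<pi> (verts n)"
    have injR: "inj_on snd R" using R(1) by (auto simp: inj_on_def A1_iff prod_eq_iff)
    have injS: "inj_on snd S" using S(1) by (auto simp: inj_on_def A2_iff prod_eq_iff)
    have gP: "g \<in> verts n \<rightarrow>\<^sub>E {1..card (verts n)}"
      using bij unfolding g_def by (auto simp: bij_betw_def)
    have inj: "inj_on \<pi> (verts n)" using bij by (simp add: bij_betw_def)
    have "(snd ` R, snd ` S, g) \<in> I"
      using R S gP unfolding I_def
      by (auto simp: card_image[OF injR] card_image[OF injS] A1_iff A2_iff)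
    moreover have "\<forall>x\<in>snd ` R \<times> snd ` S. ori x = (g (True, snd x) < g (False, fst x))"
    proof (intro ballI)
      fix x assume "x \<in> snd ` R \<times> snd ` S"
      then obtain i j where xij: "x = (i, j)" and ij: "i \<in> snd ` R" "j \<in> snd ` S" by auto
      show "ori x = (g (True, snd x) < g (False, fst x))"
        unfolding xij fst_conv snd_conv
      proof -
      from ij have iR: "(False, i) \<in> R" and jS: "(True, j) \<in> S" and i: "i < n" and j: "j < n"
        using R(1) S(1) by (auto simp: A1_iff A2_iff image_iff prod_eq_iff)
      have vi: "(False, i) \<in> verts n" and vj: "(True, j) \<in> verts n" using i j by (auto simp: verts_iff)
      have ne: "\<pi> (False, i) \<noteq> \<pi> (True, j)"
        using inj vi vj by (metis inj_on_contraD prod.inject)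
      show "ori (i, j) = (g (True, j) < g (False, i))"
      proof (cases "ori (i, j)")
        case True
        then have "((False, i), (True, j)) \<in> edges n ori" using i j by (simp add: edges_iff)
        then have "\<not> \<pi> (False, i) < \<pi> (True, j)"
          using L[of "(False, i)" "(True, j)"] iR jS by (auto simp: L_perm_def)
        then show ?thesis using True ne vi vj by (simp add: g_def)
      next
        case False
        then have "((True, j), (False, i)) \<in> edges n ori" using i j by (simp add: edges_iff)
        then have "\<not> \<pi> (True, j) < \<pi> (False, i)"
          using L[of "(True, j)" "(False, i)"] iR jS by (auto simp: L_perm_def)
        then show ?thesis using False vi vj by (simp add: g_def)
      qed
      qed
    qed
    then have "ori \<in> F (snd ` R, snd ` S, g)" by (simp add: F_def ori)
    ultimately show "ori \<in> (\<Union>z\<in>I. F z)" by blast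
  qed
  have Fb: "real (card (F z)) * c \<le> 2 ^ (n*n)" if z: "z \<in> I" for z
  proof -
    obtain R' S' g where zz: "z = (R', S', g)" by (cases z)
    have R': "R' \<subseteq> {..<n}" "real (card R') \<ge> real n / 20" and S': "S' \<subseteq> {..<n}" "real (card S') \<ge> real n / 20"
      using z unfolding zz I_def by auto
    have sub: "R' \<times> S' \<subseteq> {..<n} \<times> {..<n}" using R' S' by auto
    have cF: "card (F z) = 2 ^ (n*n - card R' * card S')"
      unfolding zz F_def using card_fix[OF sub, of "\<lambda>x. g (True, snd x) < g (False, fst x)"]
      by (simp only: prod.case card_cartesian_product)
    define k where "k = card R' * card S'"
    have kle: "k \<le> n * n"
      unfolding k_def using card_mono[OF _ R'(1)] card_mono[OF _ S'(1)] by (simp add: mult_le_mono)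
    have "real n * real n / 400 \<le> real k"
    proof -
      have "real n / 20 * (real n / 20) \<le> real (card R') * real (card S')"
        using R'(2) S'(2) by (intro mult_mono) auto
      then show ?thesis by (simp add: k_def)
    qed
    then have "c \<le> 2 powr real k" unfolding c_def by (intro powr_mono) auto
    also have "\<dots> = 2 ^ k" by (simp add: powr_realpow)
    finally have ck: "c \<le> 2 ^ k" .
    have "real (card (F z)) * c \<le> 2 ^ (n*n - k) * 2 ^ k"
      unfolding cF k_def[symmetric] using mult_left_mono[OF ck, of "(2::real) ^ (n*n - k)"] by simp
    also have "\<dots> = 2 ^ (n*n)" using kle by (simp add: power_add[symmetric])
    finally show ?thesis .
  qed
  have "real (card E) * c \<le> real (\<Sum>z\<in>I. card (F z)) * c"
  proof -
    have "card E \<le> card (\<Union>z\<in>I. F z)"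
      by (rule card_mono[OF _ EsubU]) (auto simp: finI F_def finite_orients split: prod.splits)
    also have "\<dots> \<le> (\<Sum>z\<in>I. card (F z))" by (rule card_UN_le[OF finI])
    finally have "real (card E) \<le> real (\<Sum>z\<in>I. card (F z))" by (simp only: of_nat_le_iff)
    moreover have "c \<ge> 0" unfolding c_def by simp
    ultimately show ?thesis by (rule mult_right_mono)
  qed
  also have "\<dots> = (\<Sum>z\<in>I. real (card (F z)) * c)" by (simp add: sum_distrib_right)
  also have "\<dots> \<le> (\<Sum>z\<in>I. 2 ^ (n*n))" by (rule sum_mono) (rule Fb)
  also have "\<dots> = real (card I) * 2 ^ (n*n)" by simp
  also have "\<dots> \<le> real (2 ^ n * 2 ^ n * (2 * n) ^ (2 * n)) * 2 ^ (n*n)"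
  proof (rule mult_right_mono)
    show "real (card I) \<le> real (2 ^ n * 2 ^ n * (2 * n) ^ (2 * n))"
      using cardI by (simp only: of_nat_le_iff)
  qed simp
  also have "\<dots> = 2 ^ (n*n) * (4 ^ n * (2 * real n) ^ (2 * n))"
  proof -
    have f: "(4::real) ^ n = 2 ^ n * 2 ^ n"
      unfolding power_mult_distrib[symmetric] by simp
    show ?thesis unfolding f by (simp only: of_nat_mult of_nat_power of_nat_numeral mult_ac)
  qed
  finally show "real (card {ori \<in> orients n. \<exists>R S \<pi>. R \<subseteq> A1 n \<and> real (card R) \<ge> real n / 20 \<and>
                          S \<subseteq> A2 n \<and> real (card S) \<ge> real n / 20 \<and>
                          bij_betw \<pi> (verts n) {1 .. card (verts n)} \<and>
                          (\<forall>u v. (u, v) \<in> L_perm n ori \<pi> \<longrightarrow>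
                              \<not> ((u \<in> R \<and> v \<in> S) \<or> (u \<in> S \<and> v \<in> R)))}) * c
       \<le> 2 ^ (n*n) * (4 ^ n * (2 * real n) ^ (2 * n))" unfolding E_def .
  show "c > 0" unfolding c_def by simp
qed

theorem lemma3p4:
  "\<exists>N. \<forall>n \<ge> N.
     prob_R n (\<lambda>ori. \<exists>R S \<pi>. R \<subseteq> A1 n \<and> real (card R) \<ge> real n / 20 \<and>
                          S \<subseteq> A2 n \<and> real (card S) \<ge> real n / 20 \<and>
                          bij_betw \<pi> (verts n) {1 .. card (verts n)} \<and>
                          (\<forall>u v. (u, v) \<in> L_perm n ori \<pi> \<longrightarrow>
                              \<not> ((u \<in> R \<and> v \<in> S) \<or> (u \<in> S \<and> v \<in> R))))
       \<le> 1 / real n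
   \<and> (\<forall>D u v. length D = 2 \<longrightarrow> u \<in> verts n \<longrightarrow> v \<in> verts n \<longrightarrow> u \<noteq> v \<longrightarrow>
       prob_R n (\<lambda>ori. real (card (C_D n ori D [u, v])) \<ge> 1.1 * real n / 4)
         \<le> 1 / real n ^ 3)"
proof -
  have lim1: "(\<lambda>n. real n * 4 powr real n * (2 * real n) powr (2 * real n) / 2 powr (real n * real n / 400)) \<longlonglongrightarrow> 0"
    by real_asymp
  have lim2: "(\<lambda>n. real n ^ 3 * (19/20) powr (real n / 40)) \<longlonglongrightarrow> 0"
    by real_asymp
  have ev1: "eventually (\<lambda>n. real n * 4 powr real n * (2 * real n) powr (2 * real n) / 2 powr (real n * real n / 400) < 1) sequentially"
    by (rule order_tendstoD(2)[OF lim1]) simp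
  have ev2: "eventually (\<lambda>n. real n ^ 3 * (19/20) powr (real n / 40) < 1) sequentially"
    by (rule order_tendstoD(2)[OF lim2]) simp
  have ev3: "eventually (\<lambda>n. n \<ge> 1) sequentially" by (rule eventually_ge_at_top)
  from eventually_conj[OF ev3 eventually_conj[OF ev1 ev2]] obtain N where
    N: "\<And>n. n \<ge> N \<Longrightarrow> n \<ge> 1 \<and> real n * 4 powr real n * (2 * real n) powr (2 * real n) / 2 powr (real n * real n / 400) < 1
        \<and> real n ^ 3 * (19/20) powr (real n / 40) < 1"
    unfolding eventually_sequentially by blast
  show ?thesis
  proof (rule exI[of _ N], intro allI impI conjI)
    fix n assume "n \<ge> N"
    note Nn = N[OF this]
    have npos: "real n > 0" using Nn by auto
    have e1: "4 ^ n * (2 * real n) ^ (2 * n) = 4 powr real n * (2 * real n) powr (2 * real n)"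
    proof -
      have "(4::real) ^ n = 4 powr real n" by (simp add: powr_realpow)
      moreover have "(2 * real n) ^ (2 * n) = (2 * real n) powr real (2 * n)"
        by (rule powr_realpow[symmetric]) (use npos in simp)
      moreover have "real (2 * n) = 2 * real n" by simp
      ultimately show ?thesis by metis
    qed
    have "prob_R n (\<lambda>ori. \<exists>R S \<pi>. R \<subseteq> A1 n \<and> real (card R) \<ge> real n / 20 \<and>
                          S \<subseteq> A2 n \<and> real (card S) \<ge> real n / 20 \<and>
                          bij_betw \<pi> (verts n) {1 .. card (verts n)} \<and>
                          (\<forall>u v. (u, v) \<in> L_perm n ori \<pi> \<longrightarrow>
                              \<not> ((u \<in> R \<and> v \<in> S) \<or> (u \<in> S \<and> v \<in> R))))
       \<le> 4 powr real n * (2 * real n) powr (2 * real n) / 2 powr (real n * real n / 400)"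
      using part1_bound[of n] unfolding e1 .
    also have "\<dots> \<le> 1 / real n"
      using Nn npos by (simp add: field_simps)
    finally show "prob_R n (\<lambda>ori. \<exists>R S \<pi>. R \<subseteq> A1 n \<and> real (card R) \<ge> real n / 20 \<and>
                          S \<subseteq> A2 n \<and> real (card S) \<ge> real n / 20 \<and>
                          bij_betw \<pi> (verts n) {1 .. card (verts n)} \<and>
                          (\<forall>u v. (u, v) \<in> L_perm n ori \<pi> \<longrightarrow>
                              \<not> ((u \<in> R \<and> v \<in> S) \<or> (u \<in> S \<and> v \<in> R))))
       \<le> 1 / real n" .
  next
    fix n :: nat and D :: "bool list" and u v :: "bool \<times> nat"
    assume "n \<ge> N" and a: "length D = 2" "u \<in> verts n" "v \<in> verts n" "u \<noteq> v"
    note Nn = N[OF this(1)]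
    have n1: "n \<ge> 1" and npos: "real n > 0" using Nn by auto
    have b2: "(19/20::real) powr (real n / 40) \<le> 1 / real n ^ 3"
      using Nn npos by (simp add: field_simps)
    have "prob_R n (\<lambda>ori. real (card (C_D n ori D [u, v])) \<ge> 1.1 * real n / 4) \<le> (19/20) powr (real n / 40)"
      by (rule part2_prob) (use n1 a in auto)
    with b2 show "prob_R n (\<lambda>ori. real (card (C_D n ori D [u, v])) \<ge> 1.1 * real n / 4) \<le> 1 / real n ^ 3"
      by linarith
  qed
qed

end
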